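(* There exists a 5-chromatic planar graph if and only if there exists a 4-chromatic planar graph $G$ with distinct vertices $u,v$ such that $\{u,v\}$ is an implicit-edge of $G$ and the vertex contraction $G/u,v$ is planar.
   Context: All graphs are finite, simple and connected. For a graph $G$ and vertices $u,v$, $G-uv$ denotes $G$ with the edge $uv$ removed if $uv\in E(G)$ (and $G$ itself otherwise). A $k$-coloring is a proper vertex coloring with colors from $\{1,\dots,k\}$. Given a $k$-chromatic graph $G$, a pair of distinct vertices $\{u,v\}$ is an implicit-edge of $G$ iff there is no $k$-coloring $c$ of $G-uv$ with $c(u)=c(v)$. The vertex contraction $G/u,v$ replaces $u,v$ by a single new vertex $w$ with $N(w)=(N(u)\cup N(v))\setminus\{u,v\}$. *)

theory Defs
  imports "HOL-Analysis.Analysis"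
begin

definition simple_graph :: "nat set \<Rightarrow> nat set set \<Rightarrow> bool" where
  "simple_graph V E \<longleftrightarrow> finite V \<and> V \<noteq> {} \<and> (\<forall>e\<in>E. e \<subseteq> V \<and> card e = 2)"

definition adj :: "nat set set \<Rightarrow> nat \<Rightarrow> nat \<Rightarrow> bool" where
  "adj E x y \<longleftrightarrow> {x, y} \<in> E \<and> x \<noteq> y"

definition graph_connected :: "nat set \<Rightarrow> nat set set \<Rightarrow> bool" where
  "graph_connected V E \<longleftrightarrow>
     (\<forall>x\<in>V. \<forall>y\<in>V. (x, y) \<in> {(a, b). a \<in> V \<and> b \<in> V \<and> adj E a b}\<^sup>*)"

definition is_coloring :: "nat set \<Rightarrow> nat set set \<Rightarrow> nat \<Rightarrow> (nat \<Rightarrow> nat) \<Rightarrow> bool" where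
  "is_coloring V E k c \<longleftrightarrow>
     (\<forall>x\<in>V. c x \<in> {1..k}) \<and> (\<forall>x y. {x, y} \<in> E \<and> x \<noteq> y \<longrightarrow> c x \<noteq> c y)"

definition colorable :: "nat set \<Rightarrow> nat set set \<Rightarrow> nat \<Rightarrow> bool" where
  "colorable V E k \<longleftrightarrow> (\<exists>c. is_coloring V E k c)"

definition k_chromatic :: "nat set \<Rightarrow> nat set set \<Rightarrow> nat \<Rightarrow> bool" where
  "k_chromatic V E k \<longleftrightarrow> colorable V E k \<and> \<not> colorable V E (k - 1)"

definition delete_edge :: "nat set set \<Rightarrow> nat \<Rightarrow> nat \<Rightarrow> nat set set" where
  "delete_edge E u v = E - {{u, v}}"

definition implicit_edge :: "nat set \<Rightarrow> nat set set \<Rightarrow> nat \<Rightarrow> nat \<Rightarrow> nat \<Rightarrow> bool" where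
  "implicit_edge V E k u v \<longleftrightarrow>
     k_chromatic V E k \<and> u \<in> V \<and> v \<in> V \<and> u \<noteq> v \<and>
     \<not> (\<exists>c. is_coloring V (delete_edge E u v) k c \<and> c u = c v)"

definition neighbours :: "nat set set \<Rightarrow> nat \<Rightarrow> nat set" where
  "neighbours E x = {y. adj E x y}"

text \<open>Vertex contraction G/u,v; the new vertex w is represented by the label u
  (this yields a graph isomorphic to the contraction).\<close>
definition contract_verts :: "nat set \<Rightarrow> nat set set \<Rightarrow> nat \<Rightarrow> nat \<Rightarrow> nat set" where
  "contract_verts V E u v = V - {v}"

definition contract_edges :: "nat set \<Rightarrow> nat set set \<Rightarrow> nat \<Rightarrow> nat \<Rightarrow> nat set set" where
  "contract_edges V E u v =
     {e \<in> E. u \<notin> e \<and> v \<notin> e} \<union>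
     {{u, x} | x. x \<in> (neighbours E u \<union> neighbours E v) - {u, v}}"

definition planar :: "nat set \<Rightarrow> nat set set \<Rightarrow> bool" where
  "planar V E \<longleftrightarrow>
     (\<exists>(pos :: nat \<Rightarrow> complex) (\<gamma> :: nat set \<Rightarrow> real \<Rightarrow> complex).
        inj_on pos V \<and>
        (\<forall>e\<in>E. \<exists>x y. e = {x, y} \<and> arc (\<gamma> e) \<and>
             pathstart (\<gamma> e) = pos x \<and> pathfinish (\<gamma> e) = pos y \<and>
             path_image (\<gamma> e) \<inter> pos ` V = {pos x, pos y}) \<and>
        (\<forall>e\<in>E. \<forall>e'\<in>E. e \<noteq> e' \<longrightarrow>
             path_image (\<gamma> e) \<inter> path_image (\<gamma> e') \<subseteq> pos ` (e \<inter> e')))"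

end

theory Submission
  imports Defs
begin

lemma planar_core:
  fixes pos :: "nat \<Rightarrow> complex" and \<gamma> :: "nat set \<Rightarrow> real \<Rightarrow> complex"
  assumes inj: "inj_on pos S"
  and edges: "\<forall>e\<in>E. \<exists>x y. e = {x, y} \<and> arc (\<gamma> e) \<and> pathstart (\<gamma> e) = pos x \<and> pathfinish (\<gamma> e) = pos y \<and> path_image (\<gamma> e) \<inter> pos ` S = {pos x, pos y}"
  and disj: "\<forall>e\<in>E. \<forall>e'\<in>E. e \<noteq> e' \<longrightarrow> path_image (\<gamma> e) \<inter> path_image (\<gamma> e') \<subseteq> pos ` (e \<inter> e')"
  and sub: "\<forall>e\<in>E. e \<subseteq> S"
  and ab: "{a,b} \<in> E" "a \<noteq> b" and vS: "v \<notin> S"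
  and garc: "arc (\<gamma> {a,b})" and gs: "pathstart (\<gamma> {a,b}) = pos a" and gf: "pathfinish (\<gamma> {a,b}) = pos b"
  and gi: "path_image (\<gamma> {a,b}) \<inter> pos ` S = {pos a, pos b}"
  shows "planar (insert v S) (E - {{a,b}} \<union> {{a,v},{v,b}})"
proof -
  define g where "g = \<gamma> {a,b}"
  define m where "m = g (1/2)"
  define pos' where "pos' = pos(v := m)"
  define \<gamma>' where "\<gamma>' = \<gamma>({a,v} := subpath 0 (1/2) g, {v,b} := subpath (1/2) 1 g)"
  have aS: "a \<in> S" and bS: "b \<in> S" using sub ab by auto
  have av: "a \<noteq> v" "b \<noteq> v" using aS bS vS by auto
  have avvb: "{a,v} \<noteq> {v,b}" using ab(2) av by (auto simp: doubleton_eq_iff)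
  have ginj: "inj_on g {0..1}" using garc arc_imp_inj_on g_def by blast
  have g0: "g 0 = pos a" using gs g_def by (simp add: pathstart_def)
  have g1: "g 1 = pos b" using gf by (simp add: g_def pathfinish_def)
  have gimg: "g ` {0..1} \<inter> pos ` S = {pos a, pos b}" using gi by (simp add: g_def path_image_def)
  have eq01: "t = s" if "t \<in> {0..1}" "s \<in> {0..1}" "g t = g s" for t s
    using ginj that unfolding inj_on_def by blast
  have F3: "m \<notin> pos ` S"
  proof
    assume "m \<in> pos ` S"
    moreover have "m \<in> g ` {0..1}" using m_def by auto
    ultimately have "m \<in> g ` {0..1} \<inter> pos ` S" by blast
    then have "m \<in> {g 0, g 1}" unfolding gimg g0 g1 .
    then show False using eq01[of "1/2" 0] eq01[of "1/2" 1] m_def by auto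
  qed
  have F1: "g ` {0..1/2} \<inter> pos ` S = {pos a}"
  proof
    show "g ` {0..1/2} \<inter> pos ` S \<subseteq> {pos a}"
    proof
      fix z assume z: "z \<in> g ` {0..1/2} \<inter> pos ` S"
      then obtain t where t: "t \<in> {0..1/2}" "z = g t" by auto
      have "z \<in> g ` {0..1} \<inter> pos ` S" using z t by auto
      then have "z \<in> {g 0, g 1}" unfolding gimg g0 g1 .
      moreover have "z \<noteq> g 1" using eq01[of t 1] t by auto
      ultimately show "z \<in> {pos a}" using g0 by auto
    qed
    show "{pos a} \<subseteq> g ` {0..1/2} \<inter> pos ` S" using g0 aS by force
  qed
  have F2: "g ` {1/2..1} \<inter> pos ` S = {pos b}"
  proof
    show "g ` {1/2..1} \<inter> pos ` S \<subseteq> {pos b}"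
    proof
      fix z assume z: "z \<in> g ` {1/2..1} \<inter> pos ` S"
      then obtain t where t: "t \<in> {1/2..1}" "z = g t" by auto
      have "z \<in> g ` {0..1} \<inter> pos ` S" using z t by auto
      then have "z \<in> {g 0, g 1}" unfolding gimg g0 g1 .
      moreover have "z \<noteq> g 0" using eq01[of t 0] t by auto
      ultimately show "z \<in> {pos b}" using g1 by auto
    qed
    show "{pos b} \<subseteq> g ` {1/2..1} \<inter> pos ` S" using g1 bS by force
  qed
  have F4: "g ` {0..1/2} \<inter> g ` {1/2..1} \<subseteq> {m}"
  proof
    fix z assume "z \<in> g ` {0..1/2} \<inter> g ` {1/2..1}"
    then obtain t s where "t \<in> {0..1/2}" "s \<in> {1/2..1}" "z = g t" "z = g s" by auto
    then have "t = s" using eq01[of t s] by auto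
    then have "s = 1/2" using \<open>t \<in> {0..1/2}\<close> \<open>s \<in> {1/2..1}\<close> by auto
    then have "z = m" using \<open>z = g s\<close> m_def by (simp only:)
    then show "z \<in> {m}" by simp
  qed
  have mA: "m \<in> g ` {0..1/2}" "m \<in> g ` {1/2..1}" using m_def by auto
  have F5: "m \<notin> path_image (\<gamma> e)" if "e \<in> E" "e \<noteq> {a,b}" for e
  proof
    assume "m \<in> path_image (\<gamma> e)"
    moreover have "m \<in> path_image (\<gamma> {a,b})"
    proof -
      have "m \<in> g ` {0..1}" using m_def by auto
      then show ?thesis unfolding path_image_def g_def .
    qed
    ultimately have "m \<in> path_image (\<gamma> e) \<inter> path_image (\<gamma> {a,b})" by blast
    moreover have "path_image (\<gamma> e) \<inter> path_image (\<gamma> {a,b}) \<subseteq> pos ` (e \<inter> {a,b})"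
      using disj that(1) ab(1) that(2) by simp
    ultimately have "m \<in> pos ` (e \<inter> {a,b})" by blast
    moreover have "pos ` (e \<inter> {a,b}) \<subseteq> pos ` S" using aS bS by blast
    ultimately show False using F3 by blast
  qed
  have pos'S: "pos' z = pos z" if "z \<in> S" for z using that vS pos'_def by auto
  have img': "pos' ` insert v S = insert m (pos ` S)"
    using pos'S by (auto simp: pos'_def vS)
  have pos'S_img: "pos' ` S = pos ` S" using pos'S by auto
  have \<gamma>'old: "\<gamma>' e = \<gamma> e" if "e \<in> E" "e \<noteq> {a,b}" for e
  proof -
    have "v \<notin> e" using sub that vS by auto
    then have "e \<noteq> {a,v}" "e \<noteq> {v,b}" by auto
    then show ?thesis by (simp add: \<gamma>'_def)
  qed
  have \<gamma>'1: "\<gamma>' {a,v} = subpath 0 (1/2) g" using avvb by (simp add: \<gamma>'_def)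
  have \<gamma>'2: "\<gamma>' {v,b} = subpath (1/2) 1 g" by (simp add: \<gamma>'_def)
  have pi1: "path_image (\<gamma>' {a,v}) = g ` {0..1/2}" using \<gamma>'1 by (simp add: path_image_subpath)
  have pi2: "path_image (\<gamma>' {v,b}) = g ` {1/2..1}" using \<gamma>'2 by (simp add: path_image_subpath)
  have pbA: "pos b \<notin> g ` {0..1/2}"
  proof
    assume "pos b \<in> g ` {0..1/2}"
    then obtain t where t: "t \<in> {0..1/2}" "g t = g 1" using g1 by auto
    then have "t = 1" using eq01[of t 1] by auto
    then show False using t by auto
  qed
  have paB: "pos a \<notin> g ` {1/2..1}"
  proof
    assume "pos a \<in> g ` {1/2..1}"
    then obtain t where t: "t \<in> {1/2..1}" "g t = g 0" using g0 by auto
    then have "t = 0" using eq01[of t 0] by auto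
    then show False using t by auto
  qed
  have H1: "path_image (\<gamma> e) \<inter> g ` {0..1/2} \<subseteq> pos ` (e \<inter> {a})" if "e \<in> E" "e \<noteq> {a,b}" for e
  proof -
    have "path_image (\<gamma> e) \<inter> path_image g \<subseteq> pos ` (e \<inter> {a,b})" using disj that(1) ab(1) that(2) unfolding g_def by simp
    moreover have "g ` {0..1/2} \<subseteq> path_image g" by (auto simp: path_image_def)
    ultimately have X: "path_image (\<gamma> e) \<inter> g ` {0..1/2} \<subseteq> pos ` (e \<inter> {a,b})" by blast
    show ?thesis
    proof
      fix z assume z: "z \<in> path_image (\<gamma> e) \<inter> g ` {0..1/2}"
      then obtain w where w: "w \<in> e \<inter> {a,b}" "z = pos w" using X by blast
      have "w \<noteq> b" using w z pbA by auto
      then show "z \<in> pos ` (e \<inter> {a})" using w by auto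
    qed
  qed
  have H2: "path_image (\<gamma> e) \<inter> g ` {1/2..1} \<subseteq> pos ` (e \<inter> {b})" if "e \<in> E" "e \<noteq> {a,b}" for e
  proof -
    have "path_image (\<gamma> e) \<inter> path_image g \<subseteq> pos ` (e \<inter> {a,b})" using disj that(1) ab(1) that(2) unfolding g_def by simp
    moreover have "g ` {1/2..1} \<subseteq> path_image g" by (auto simp: path_image_def)
    ultimately have X: "path_image (\<gamma> e) \<inter> g ` {1/2..1} \<subseteq> pos ` (e \<inter> {a,b})" by blast
    show ?thesis
    proof
      fix z assume z: "z \<in> path_image (\<gamma> e) \<inter> g ` {1/2..1}"
      then obtain w where w: "w \<in> e \<inter> {a,b}" "z = pos w" using X by blast
      have "w \<noteq> a" using w z paB by auto
      then show "z \<in> pos ` (e \<inter> {b})" using w by auto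
    qed
  qed
  have C1: "inj_on pos' (insert v S)"
  proof -
    have "inj_on pos' S" using inj pos'S inj_on_cong by blast
    moreover have "pos' v \<notin> pos' ` S" using F3 pos'S_img pos'_def by simp
    ultimately show ?thesis using vS by simp
  qed
  let ?E = "E - {{a,b}} \<union> {{a,v},{v,b}}"
  have C2: "\<forall>e\<in>?E. \<exists>x y. e = {x, y} \<and> arc (\<gamma>' e) \<and> pathstart (\<gamma>' e) = pos' x \<and> pathfinish (\<gamma>' e) = pos' y \<and> path_image (\<gamma>' e) \<inter> pos' ` (insert v S) = {pos' x, pos' y}"
  proof
    fix e assume e: "e \<in> ?E"
    show "\<exists>x y. e = {x, y} \<and> arc (\<gamma>' e) \<and> pathstart (\<gamma>' e) = pos' x \<and> pathfinish (\<gamma>' e) = pos' y \<and> path_image (\<gamma>' e) \<inter> pos' ` (insert v S) = {pos' x, pos' y}"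
    proof (cases "e \<in> E - {{a,b}}")
      case True
      then obtain x y where xy: "e = {x, y}" "arc (\<gamma> e)" "pathstart (\<gamma> e) = pos x" "pathfinish (\<gamma> e) = pos y" "path_image (\<gamma> e) \<inter> pos ` S = {pos x, pos y}"
        using edges by blast
      have xyS: "x \<in> S" "y \<in> S" using sub True xy(1) by auto
      have PI: "path_image (\<gamma> e) \<inter> pos' ` (insert v S) = {pos x, pos y}"
        using xy(5) F5[of e] True img' by auto
      have ge: "\<gamma>' e = \<gamma> e" using \<gamma>'old[of e] True by auto
      show ?thesis
        apply (rule exI[of _ x], rule exI[of _ y])
        using xy ge PI pos'S[OF xyS(1)] pos'S[OF xyS(2)] by simp
    next
      case False
      then have "e = {a,v} \<or> e = {v,b}" using e by auto
      then show ?thesis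
      proof
        assume ee: "e = {a,v}"
        have "path_image (\<gamma>' e) \<inter> pos' ` (insert v S) = {pos' a, pos' v}"
          using ee pi1 img' F1 mA pos'S aS pos'_def by auto
        moreover have "arc (\<gamma>' e)" unfolding ee \<gamma>'1 g_def by (rule arc_subpath_arc[OF garc]) auto
        moreover have "pos' a = pos a" "pos' v = m" using pos'S aS pos'_def by auto
        moreover have "pathstart (\<gamma>' e) = pos' a" using ee \<gamma>'1 g0 m_def \<open>pos' a = _\<close> by simp
        moreover have "pathfinish (\<gamma>' e) = pos' v" using ee \<gamma>'1 g0 m_def \<open>pos' v = _\<close> by simp
        ultimately show ?thesis using ee by blast
      next
        assume ee: "e = {v,b}"
        have "path_image (\<gamma>' e) \<inter> pos' ` (insert v S) = {pos' v, pos' b}"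
          using ee pi2 img' F2 mA pos'S bS pos'_def by auto
        moreover have "arc (\<gamma>' e)" unfolding ee \<gamma>'2 g_def by (rule arc_subpath_arc[OF garc]) auto
        moreover have "pos' b = pos b" "pos' v = m" using pos'S bS pos'_def by auto
        moreover have "pathstart (\<gamma>' e) = pos' v" using ee \<gamma>'2 g1 m_def \<open>pos' v = _\<close> by simp
        moreover have "pathfinish (\<gamma>' e) = pos' b" using ee \<gamma>'2 g1 m_def \<open>pos' b = _\<close> by simp
        ultimately show ?thesis using ee by blast
      qed
    qed
  qed
  have old_old: "path_image (\<gamma>' e) \<inter> path_image (\<gamma>' e') \<subseteq> pos' ` (e \<inter> e')"
    if "e \<in> E - {{a,b}}" "e' \<in> E - {{a,b}}" "e \<noteq> e'" for e e'
  proof -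
    have "e \<inter> e' \<subseteq> S" using sub that by auto
    then have "pos' ` (e \<inter> e') = pos ` (e \<inter> e')" using pos'S by (intro image_cong) auto
    moreover have "path_image (\<gamma> e) \<inter> path_image (\<gamma> e') \<subseteq> pos ` (e \<inter> e')"
      using disj that by simp
    ultimately show ?thesis using that \<gamma>'old by simp
  qed
  have old_1: "path_image (\<gamma>' e) \<inter> path_image (\<gamma>' {a,v}) \<subseteq> pos' ` (e \<inter> {a,v})"
    if "e \<in> E - {{a,b}}" for e
  proof -
    have "v \<notin> e" using sub that vS by auto
    then have "pos ` (e \<inter> {a}) \<subseteq> pos' ` (e \<inter> {a,v})" using pos'S aS by auto
    then show ?thesis using H1[of e] that \<gamma>'old pi1 by auto
  qed
  have old_2: "path_image (\<gamma>' e) \<inter> path_image (\<gamma>' {v,b}) \<subseteq> pos' ` (e \<inter> {v,b})"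
    if "e \<in> E - {{a,b}}" for e
  proof -
    have "v \<notin> e" using sub that vS by auto
    then have "pos ` (e \<inter> {b}) \<subseteq> pos' ` (e \<inter> {v,b})" using pos'S bS by auto
    then show ?thesis using H2[of e] that \<gamma>'old pi2 by auto
  qed
  have n12: "path_image (\<gamma>' {a,v}) \<inter> path_image (\<gamma>' {v,b}) \<subseteq> pos' ` ({a,v} \<inter> {v,b})"
    using pi1 pi2 F4 pos'_def by auto
  have C3: "\<forall>e\<in>?E. \<forall>e'\<in>?E. e \<noteq> e' \<longrightarrow> path_image (\<gamma>' e) \<inter> path_image (\<gamma>' e') \<subseteq> pos' ` (e \<inter> e')"
  proof (intro ballI impI)
    fix e e' assume e: "e \<in> ?E" and e': "e' \<in> ?E" and ne: "e \<noteq> e'"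
    consider "e \<in> E - {{a,b}}" | "e = {a,v}" | "e = {v,b}" using e by auto
    then show "path_image (\<gamma>' e) \<inter> path_image (\<gamma>' e') \<subseteq> pos' ` (e \<inter> e')"
    proof cases
      case 1
      consider "e' \<in> E - {{a,b}}" | "e' = {a,v}" | "e' = {v,b}" using e' by auto
      then show ?thesis using 1 old_old ne old_1 old_2 by cases auto
    next
      case 2
      consider "e' \<in> E - {{a,b}}" | "e' = {v,b}" using e' ne 2 by auto
      then show ?thesis using 2 old_1 n12 by cases (auto simp: Int_commute)
    next
      case 3
      consider "e' \<in> E - {{a,b}}" | "e' = {a,v}" using e' ne 3 by auto
      then show ?thesis using 3 old_2 n12 by cases (auto simp: Int_commute)
    qed
  qed
  show ?thesis unfolding planar_def using C1 C2 C3 by blast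
qed



lemma adj_sym: "adj E a b = adj E b a"
  by (auto simp: adj_def insert_commute)

lemma conn_from_root:
  assumes "\<forall>p\<in>V. (r,p) \<in> {(a,b). a\<in>V \<and> b\<in>V \<and> adj E a b}\<^sup>*"
  shows "graph_connected V E"
proof -
  let ?R = "{(a,b). a\<in>V \<and> b\<in>V \<and> adj E a b}"
  have sym: "?R\<inverse> = ?R" using adj_sym by fastforce
  show ?thesis unfolding graph_connected_def
  proof (intro ballI)
    fix p q assume "p \<in> V" "q \<in> V"
    then have rp: "(r,p) \<in> ?R\<^sup>*" and rq: "(r,q) \<in> ?R\<^sup>*" using assms by auto
    have "(p,r) \<in> (?R\<inverse>)\<^sup>*" using rp by (rule rtrancl_converseI)
    then have "(p,r) \<in> ?R\<^sup>*" using sym by simp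
    then show "(p,q) \<in> ?R\<^sup>*" using rq by (rule rtrancl_trans)
  qed
qed

lemma planar_sub:
  assumes "planar V E" "V' \<subseteq> V" "E' \<subseteq> E" "\<forall>e\<in>E'. e \<subseteq> V'"
  shows "planar V' E'"
proof -
  obtain pos :: "nat \<Rightarrow> complex" and \<gamma> :: "nat set \<Rightarrow> real \<Rightarrow> complex" where
    inj: "inj_on pos V" and
    edges: "\<forall>e\<in>E. \<exists>x y. e = {x, y} \<and> arc (\<gamma> e) \<and> pathstart (\<gamma> e) = pos x \<and> pathfinish (\<gamma> e) = pos y \<and> path_image (\<gamma> e) \<inter> pos ` V = {pos x, pos y}"
    and disj: "\<forall>e\<in>E. \<forall>e'\<in>E. e \<noteq> e' \<longrightarrow> path_image (\<gamma> e) \<inter> path_image (\<gamma> e') \<subseteq> pos ` (e \<inter> e')"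
    using assms(1) unfolding planar_def by blast
  have C1: "inj_on pos V'" using inj assms(2) inj_on_subset by blast
  have C2: "\<forall>e\<in>E'. \<exists>x y. e = {x, y} \<and> arc (\<gamma> e) \<and> pathstart (\<gamma> e) = pos x \<and> pathfinish (\<gamma> e) = pos y \<and> path_image (\<gamma> e) \<inter> pos ` V' = {pos x, pos y}"
  proof
    fix e assume e: "e \<in> E'"
    then have "e \<in> E" using assms(3) by blast
    from bspec[OF edges this] obtain x y where xy: "e = {x, y}" "arc (\<gamma> e)" "pathstart (\<gamma> e) = pos x" "pathfinish (\<gamma> e) = pos y" "path_image (\<gamma> e) \<inter> pos ` V = {pos x, pos y}"
      by blast
    have "x \<in> V'" "y \<in> V'" using e xy(1) assms(4) by auto
    moreover have "pos x \<in> path_image (\<gamma> e)" "pos y \<in> path_image (\<gamma> e)" using xy(5) by blast+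
    moreover have "path_image (\<gamma> e) \<inter> pos ` V' \<subseteq> path_image (\<gamma> e) \<inter> pos ` V" using assms(2) by blast
    ultimately have "path_image (\<gamma> e) \<inter> pos ` V' = {pos x, pos y}" unfolding xy(5) by blast
    then show "\<exists>x y. e = {x, y} \<and> arc (\<gamma> e) \<and> pathstart (\<gamma> e) = pos x \<and> pathfinish (\<gamma> e) = pos y \<and> path_image (\<gamma> e) \<inter> pos ` V' = {pos x, pos y}"
      using xy by blast
  qed
  have C3: "\<forall>e\<in>E'. \<forall>e'\<in>E'. e \<noteq> e' \<longrightarrow> path_image (\<gamma> e) \<inter> path_image (\<gamma> e') \<subseteq> pos ` (e \<inter> e')"
  proof (intro ballI impI)
    fix e e' assume "e \<in> E'" "e' \<in> E'" "e \<noteq> e'"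
    then have "e \<in> E" "e' \<in> E" "e \<noteq> e'" using assms(3) by auto
    then show "path_image (\<gamma> e) \<inter> path_image (\<gamma> e') \<subseteq> pos ` (e \<inter> e')" using disj by simp
  qed
  show ?thesis unfolding planar_def using C1 C2 C3 by blast
qed

lemma planar_subdiv:
  assumes pl: "planar S E" and sub: "\<forall>e\<in>E. e \<subseteq> S" and ab: "{a,b} \<in> E" "a \<noteq> b" and vS: "v \<notin> S"
  shows "planar (insert v S) (E - {{a,b}} \<union> {{a,v},{v,b}})"
proof -
  obtain pos :: "nat \<Rightarrow> complex" and \<gamma> :: "nat set \<Rightarrow> real \<Rightarrow> complex" where
    inj: "inj_on pos S" and
    edges: "\<forall>e\<in>E. \<exists>x y. e = {x, y} \<and> arc (\<gamma> e) \<and> pathstart (\<gamma> e) = pos x \<and> pathfinish (\<gamma> e) = pos y \<and> path_image (\<gamma> e) \<inter> pos ` S = {pos x, pos y}"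
    and disj: "\<forall>e\<in>E. \<forall>e'\<in>E. e \<noteq> e' \<longrightarrow> path_image (\<gamma> e) \<inter> path_image (\<gamma> e') \<subseteq> pos ` (e \<inter> e')"
    using pl unfolding planar_def by blast
  from bspec[OF edges ab(1)] obtain x y where xy: "{a,b} = {x, y}" "arc (\<gamma> {a,b})" "pathstart (\<gamma> {a,b}) = pos x" "pathfinish (\<gamma> {a,b}) = pos y" "path_image (\<gamma> {a,b}) \<inter> pos ` S = {pos x, pos y}"
    by blast
  then have "(x = a \<and> y = b) \<or> (x = b \<and> y = a)" by (auto simp: doubleton_eq_iff)
  then show ?thesis
  proof
    assume h: "x = a \<and> y = b"
    show ?thesis
      by (rule planar_core[OF inj edges disj sub ab vS]) (use xy h in auto)
  next
    assume h: "x = b \<and> y = a"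
    have ba: "{b,a} = {a,b}" by (rule insert_commute)
    have "planar (insert v S) (E - {{b,a}} \<union> {{b,v},{v,a}})"
      by (rule planar_core[OF inj edges disj sub]) (use xy h ab vS ba in auto)
    moreover have "E - {{b,a}} \<union> {{b,v},{v,a}} = E - {{a,b}} \<union> {{a,v},{v,b}}" by (auto simp: insert_commute)
    ultimately show ?thesis by simp
  qed
qed

lemma backward:
  assumes sg: "simple_graph V E" and conn: "graph_connected V E" and ch: "k_chromatic V E 4"
    and uV: "u \<in> V" and vV: "v \<in> V" and uv: "u \<noteq> v" and imp: "implicit_edge V E 4 u v"
  shows "simple_graph (contract_verts V E u v) (contract_edges V E u v) \<and>
         graph_connected (contract_verts V E u v) (contract_edges V E u v) \<and>
         k_chromatic (contract_verts V E u v) (contract_edges V E u v) 5"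
proof -
  define V' where "V' = contract_verts V E u v"
  define E' where "E' = contract_edges V E u v"
  have V'eq: "V' = V - {v}" by (simp add: V'_def contract_verts_def)
  have E'eq: "E' = {e \<in> E. u \<notin> e \<and> v \<notin> e} \<union> {{u, x} | x. x \<in> (neighbours E u \<union> neighbours E v) - {u, v}}"
    by (simp add: E'_def contract_edges_def)
  have Esub: "\<And>e. e \<in> E \<Longrightarrow> e \<subseteq> V \<and> card e = 2" using sg by (auto simp: simple_graph_def)
  have finV: "finite V" using sg by (simp add: simple_graph_def)
  have adjV: "x \<in> V" if "adj E w x" for w x using that Esub unfolding adj_def by blast
  have kept: "{p,q} \<in> E'" if "{p,q} \<in> E" "p \<notin> {u,v}" "q \<notin> {u,v}" for p q
    using that unfolding E'eq by blast
  have new: "{u,x} \<in> E'" if "adj E u x \<or> adj E v x" "x \<notin> {u,v}" for x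
  proof -
    have "x \<in> (neighbours E u \<union> neighbours E v) - {u, v}" using that by (auto simp: neighbours_def)
    then show ?thesis unfolding E'eq by blast
  qed
  have E'cases: "(e \<in> E \<and> u \<notin> e \<and> v \<notin> e) \<or> (\<exists>x. e = {u,x} \<and> x \<notin> {u,v} \<and> (adj E u x \<or> adj E v x))"
    if "e \<in> E'" for e
    using that unfolding E'eq by (auto simp: neighbours_def)
  have SG: "simple_graph V' E'"
    unfolding simple_graph_def
  proof (intro conjI)
    show "finite V'" using finV V'eq by simp
    show "V' \<noteq> {}" using uV uv V'eq by auto
  next
    show "\<forall>e\<in>E'. e \<subseteq> V' \<and> card e = 2"
    proof
    fix e assume "e \<in> E'"
    then consider "e \<in> E" "u \<notin> e" "v \<notin> e" | x where "e = {u,x}" "x \<notin> {u,v}" "adj E u x \<or> adj E v x"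
      using E'cases by blast
    then show "e \<subseteq> V' \<and> card e = 2"
    proof cases
      case 1 then show ?thesis using Esub V'eq by auto
    next
      case 2 then show ?thesis using adjV uV uv V'eq by auto
    qed
  qed
  qed
  define f where "f z = (if z = v then u else z)" for z
  let ?R = "{(a,b). a\<in>V \<and> b\<in>V \<and> adj E a b}"
  let ?R' = "{(a,b). a\<in>V' \<and> b\<in>V' \<and> adj E' a b}"
  have fstep: "(f p, f q) \<in> ?R'\<^sup>*" if "(p,q) \<in> ?R" for p q
  proof -
    have pq: "p \<in> V" "q \<in> V" "{p,q} \<in> E" "p \<noteq> q" using that by (auto simp: adj_def)
    have fV: "f z \<in> V'" if "z \<in> V" for z using that uV uv V'eq by (auto simp: f_def)
    have "f p = f q \<or> adj E' (f p) (f q)"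
    proof (cases "{p,q} = {u,v}")
      case True then show ?thesis by (auto simp: f_def doubleton_eq_iff)
    next
      case False
      consider "p \<notin> {u,v}" "q \<notin> {u,v}" | "p \<in> {u,v}" "q \<notin> {u,v}" | "p \<notin> {u,v}" "q \<in> {u,v}"
        using False pq(4) by auto
      then show ?thesis
      proof cases
        case 1 then show ?thesis using kept[OF pq(3)] pq(4) by (auto simp: f_def adj_def)
      next
        case 2
        have "adj E u q \<or> adj E v q" using 2 pq(3,4) by (auto simp: adj_def)
        then have "{u,q} \<in> E'" using new 2 by blast
        then show ?thesis using 2 by (auto simp: f_def adj_def)
      next
        case 3
        have "{q,p} \<in> E" using pq(3) by (simp add: insert_commute)
        then have "adj E u p \<or> adj E v p" using 3 pq(4) by (auto simp: adj_def)
        then have "{u,p} \<in> E'" using new 3 by blast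
        then show ?thesis using 3 by (auto simp: f_def adj_def insert_commute)
      qed
    qed
    then show ?thesis using fV pq(1,2) by auto
  qed
  have fpath: "(f p, f q) \<in> ?R'\<^sup>*" if "(p,q) \<in> ?R\<^sup>*" for p q
    using that
  proof (induction rule: rtrancl_induct)
    case base then show ?case by simp
  next
    case (step y z)
    have "(f y, f z) \<in> ?R'\<^sup>*" using fstep step.hyps(2) by blast
    with step.IH show ?case by (rule rtrancl_trans)
  qed
  have CONN: "graph_connected V' E'"
  proof (rule conn_from_root[where r = u], intro ballI)
    fix p assume "p \<in> V'"
    then have "p \<in> V" "p \<noteq> v" using V'eq by auto
    then have "(u,p) \<in> ?R\<^sup>*" using conn uV unfolding graph_connected_def by blast
    then have "(f u, f p) \<in> ?R'\<^sup>*" by (rule fpath)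
    then show "(u,p) \<in> ?R'\<^sup>*" using \<open>p \<noteq> v\<close> uv by (simp add: f_def)
  qed
  obtain c where c: "is_coloring V E 4 c" using ch by (auto simp: k_chromatic_def colorable_def)
  have col5: "colorable V' E' 5"
  proof -
    define c' where "c' = c(u := 5)"
    have "is_coloring V' E' 5 c'"
      unfolding is_coloring_def
    proof (intro conjI allI impI ballI)
      fix x assume "x \<in> V'" then show "c' x \<in> {1..5}" using c V'eq by (auto simp: c'_def is_coloring_def)
    next
      fix x y assume xy: "{x,y} \<in> E' \<and> x \<noteq> y"
      then consider "{x,y} \<in> E" "u \<notin> {x,y}" "v \<notin> {x,y}" | z where "{x,y} = {u,z}" "z \<notin> {u,v}" "adj E u z \<or> adj E v z"
        using E'cases by blast
      then show "c' x \<noteq> c' y"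
      proof cases
        case 1 then show ?thesis using c xy by (auto simp: c'_def is_coloring_def)
      next
        case 2
        have "c z \<in> {1..4}" using c adjV 2(3) by (auto simp: is_coloring_def)
        then show ?thesis using 2 by (auto simp: c'_def doubleton_eq_iff)
      qed
    qed
    then show ?thesis by (auto simp: colorable_def)
  qed
  have ncol4: "\<not> colorable V' E' 4"
  proof
    assume "colorable V' E' 4"
    then obtain d where d: "is_coloring V' E' 4 d" by (auto simp: colorable_def)
    define d' where "d' = d(v := d u)"
    have du: "d u \<in> {1..4}" using d uV uv V'eq by (auto simp: is_coloring_def)
    have dedge: "d u \<noteq> d z" if "{u,z} \<in> E'" "u \<noteq> z" for z
      using d that by (auto simp: is_coloring_def)
    have "is_coloring V (delete_edge E u v) 4 d'"
      unfolding is_coloring_def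
    proof (intro conjI allI impI ballI)
      fix x assume "x \<in> V" then show "d' x \<in> {1..4}" using d du V'eq by (auto simp: d'_def is_coloring_def)
    next
      fix x y assume xy: "{x,y} \<in> delete_edge E u v \<and> x \<noteq> y"
      then have xyE: "{x,y} \<in> E" "{x,y} \<noteq> {u,v}" "x \<noteq> y" by (auto simp: delete_edge_def)
      consider "x \<notin> {u,v}" "y \<notin> {u,v}" | "x \<in> {u,v}" "y \<notin> {u,v}" | "x \<notin> {u,v}" "y \<in> {u,v}"
        using xyE(2,3) by auto
      then show "d' x \<noteq> d' y"
      proof cases
        case 1
        have "{x,y} \<in> E'" using kept[OF xyE(1)] 1 by simp
        then show ?thesis using d xyE(3) 1 by (auto simp: d'_def is_coloring_def)
      next
        case 2
        have "adj E u y \<or> adj E v y" using 2 xyE by (auto simp: adj_def)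
        then have "{u,y} \<in> E'" using new 2 by blast
        then have "d u \<noteq> d y" using dedge 2 by auto
        then show ?thesis using 2 by (auto simp: d'_def)
      next
        case 3
        have "{y,x} \<in> E" using xyE(1) by (simp add: insert_commute)
        then have "adj E u x \<or> adj E v x" using 3 xyE(3) by (auto simp: adj_def)
        then have "{u,x} \<in> E'" using new 3 by blast
        then have "d u \<noteq> d x" using dedge 3 by auto
        then show ?thesis using 3 by (auto simp: d'_def)
      qed
    qed
    moreover have "d' u = d' v" using uv by (simp add: d'_def)
    ultimately show False using imp by (auto simp: implicit_edge_def)
  qed
  have "k_chromatic V' E' 5" using col5 ncol4 by (simp add: k_chromatic_def)
  then show ?thesis using SG CONN V'_def E'_def by simp
qed


lemma construct:
  assumes sg: "simple_graph S E" and conn: "graph_connected S E" and pl: "planar S E"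
    and ab: "{a,b} \<in> E" and anb: "a \<noteq> b" and nc: "\<not> colorable S E 4"
    and col: "colorable S (E - {{a,b}}) 4" and vS: "v \<notin> S"
  shows "\<exists>V E u v. simple_graph V E \<and> graph_connected V E \<and> planar V E \<and> k_chromatic V E 4 \<and>
        u \<in> V \<and> v \<in> V \<and> u \<noteq> v \<and> implicit_edge V E 4 u v \<and>
        planar (contract_verts V E u v) (contract_edges V E u v)"
proof -
  define EG where "EG = E - {{a,b}} \<union> {{a,v},{v,b}}"
  define VG where "VG = insert v S"
  have sub: "\<forall>e\<in>E. e \<subseteq> S" and c2: "\<forall>e\<in>E. card e = 2" and finS: "finite S" and Sne: "S \<noteq> {}"
    using sg by (auto simp: simple_graph_def)
  have aS: "a \<in> S" and bS: "b \<in> S" using sub ab by auto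
  have av: "a \<noteq> v" and bv: "b \<noteq> v" using aS bS vS by auto
  have vnot: "v \<notin> e" if "e \<in> E" for e using sub that vS by auto
  have avvb: "{a,v} \<noteq> {v,b}" using anb av by (auto simp: doubleton_eq_iff)
  have SG: "simple_graph VG EG"
    unfolding simple_graph_def
  proof (intro conjI)
    show "finite VG" using finS by (simp add: VG_def)
    show "VG \<noteq> {}" by (simp add: VG_def)
    show "\<forall>e\<in>EG. e \<subseteq> VG \<and> card e = 2"
    proof
      fix e assume "e \<in> EG"
      then consider "e \<in> E" | "e = {a,v}" | "e = {v,b}" by (auto simp: EG_def)
      then show "e \<subseteq> VG \<and> card e = 2"
        by cases (use sub c2 aS bS av bv in \<open>auto simp: VG_def\<close>)
    qed
  qed
  have PL: "planar VG EG" unfolding VG_def EG_def by (rule planar_subdiv[OF pl sub ab anb vS])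
  let ?RH = "{(x,y). x\<in>S \<and> y\<in>S \<and> adj E x y}"
  let ?RG = "{(x,y). x\<in>VG \<and> y\<in>VG \<and> adj EG x y}"
  have step: "(p,q) \<in> ?RG\<^sup>*" if "(p,q) \<in> ?RH" for p q
  proof -
    have pq: "p \<in> S" "q \<in> S" "{p,q} \<in> E" "p \<noteq> q" using that by (auto simp: adj_def)
    show ?thesis
    proof (cases "{p,q} = {a,b}")
      case True
      then have "(p = a \<and> q = b) \<or> (p = b \<and> q = a)" by (auto simp: doubleton_eq_iff)
      then have "{p,v} \<in> EG \<and> {v,q} \<in> EG" by (auto simp: EG_def insert_commute)
      then have "(p,v) \<in> ?RG" "(v,q) \<in> ?RG" using pq vS by (auto simp: adj_def VG_def)
      then show ?thesis by (meson r_into_rtrancl rtrancl_into_rtrancl)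
    next
      case False
      then have "{p,q} \<in> EG" using pq by (auto simp: EG_def)
      then have "(p,q) \<in> ?RG" using pq by (auto simp: adj_def VG_def)
      then show ?thesis by blast
    qed
  qed
  have HG: "?RH\<^sup>* \<subseteq> ?RG\<^sup>*" by (rule rtrancl_subset_rtrancl) (use step in auto)
  have CONN: "graph_connected VG EG"
  proof (rule conn_from_root[where r = a], intro ballI)
    fix p assume p: "p \<in> VG"
    show "(a,p) \<in> ?RG\<^sup>*"
    proof (cases "p = v")
      case True
      have "{a,v} \<in> EG" by (simp add: EG_def)
      then have "(a,v) \<in> ?RG" using aS av by (auto simp: adj_def VG_def)
      then show ?thesis using True by blast
    next
      case False
      then have "p \<in> S" using p by (simp add: VG_def)
      then have "(a,p) \<in> ?RH\<^sup>*" using conn aS unfolding graph_connected_def by blast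
      then show ?thesis using HG by blast
    qed
  qed
  obtain c where c: "is_coloring S (E - {{a,b}}) 4 c" using col by (auto simp: colorable_def)
  have col4: "colorable VG EG 4"
  proof -
    define k where "k = (if 1 \<notin> {c a, c b} then 1 else if 2 \<notin> {c a, c b} then 2 else (3::nat))"
    have k: "k \<in> {1..4}" "k \<noteq> c a" "k \<noteq> c b" by (auto simp: k_def)
    define c' where "c' = c(v := k)"
    have "is_coloring VG EG 4 c'"
      unfolding is_coloring_def
    proof (intro conjI allI impI ballI)
      fix x assume "x \<in> VG" then show "c' x \<in> {1..4}" using c k by (auto simp: c'_def VG_def is_coloring_def)
    next
      fix x y assume xy: "{x,y} \<in> EG \<and> x \<noteq> y"
      then consider "{x,y} \<in> E - {{a,b}}" | "{x,y} = {a,v}" | "{x,y} = {v,b}" by (auto simp: EG_def)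
      then show "c' x \<noteq> c' y"
      proof cases
        case 1
        then have "x \<noteq> v" "y \<noteq> v" using vnot by auto
        then show ?thesis using c 1 xy by (auto simp: c'_def is_coloring_def)
      next
        case 2 then show ?thesis using k av by (auto simp: c'_def doubleton_eq_iff)
      next
        case 3 then show ?thesis using k bv by (auto simp: c'_def doubleton_eq_iff)
      qed
    qed
    then show ?thesis by (auto simp: colorable_def)
  qed
  have ncol3: "\<not> colorable VG EG 3"
  proof
    assume "colorable VG EG 3"
    then obtain c3 where c3: "is_coloring VG EG 3 c3" by (auto simp: colorable_def)
    define d where "d = c3(a := 4)"
    have rng: "c3 x \<in> {1..3}" if "x \<in> S" for x using c3 that by (auto simp: is_coloring_def VG_def)
    have ced: "c3 x \<noteq> c3 y" if "{x,y} \<in> EG" "x \<noteq> y" for x y using c3 that by (auto simp: is_coloring_def)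
    have "is_coloring S E 4 d"
      unfolding is_coloring_def
    proof (intro conjI allI impI ballI)
      fix x assume "x \<in> S" then show "d x \<in> {1..4}" using rng[of x] by (auto simp: d_def)
    next
      fix x y assume xy: "{x,y} \<in> E \<and> x \<noteq> y"
      have xyS: "x \<in> S" "y \<in> S" using xy sub by auto
      show "d x \<noteq> d y"
      proof (cases "x = a \<or> y = a")
        case True
        then show ?thesis using xy rng[OF xyS(1)] rng[OF xyS(2)] by (auto simp: d_def)
      next
        case False
        then have "{x,y} \<noteq> {a,b}" by auto
        then have "{x,y} \<in> EG" using xy by (auto simp: EG_def)
        then show ?thesis using ced xy False by (auto simp: d_def)
      qed
    qed
    then show False using nc by (auto simp: colorable_def)
  qed
  have K4: "k_chromatic VG EG 4" using col4 ncol3 by (simp add: k_chromatic_def)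
  have IMP: "implicit_edge VG EG 4 a v"
    unfolding implicit_edge_def
  proof (intro conjI)
    show "k_chromatic VG EG 4" by (rule K4)
    show "a \<in> VG" "v \<in> VG" using aS by (auto simp: VG_def)
    show "a \<noteq> v" by (rule av)
    show "\<not> (\<exists>c. is_coloring VG (delete_edge EG a v) 4 c \<and> c a = c v)"
    proof
    assume "\<exists>c. is_coloring VG (delete_edge EG a v) 4 c \<and> c a = c v"
    then obtain d where d: "is_coloring VG (delete_edge EG a v) 4 d" "d a = d v" by blast
    have ded: "d x \<noteq> d y" if "{x,y} \<in> EG" "{x,y} \<noteq> {a,v}" "x \<noteq> y" for x y
      using d(1) that by (auto simp: is_coloring_def delete_edge_def)
    have dvb: "d v \<noteq> d b" using ded[of v b] avvb bv by (auto simp: EG_def)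
    have "is_coloring S E 4 d"
      unfolding is_coloring_def
    proof (intro conjI allI impI ballI)
      fix x assume "x \<in> S" then show "d x \<in> {1..4}" using d(1) by (auto simp: is_coloring_def VG_def)
    next
      fix x y assume xy: "{x,y} \<in> E \<and> x \<noteq> y"
      show "d x \<noteq> d y"
      proof (cases "{x,y} = {a,b}")
        case True
        then have "(x = a \<and> y = b) \<or> (x = b \<and> y = a)" by (auto simp: doubleton_eq_iff)
        then show ?thesis using dvb d(2) by auto
      next
        case False
        have "v \<notin> {x,y}" using vnot xy by blast
        then have "{x,y} \<noteq> {a,v}" by auto
        moreover have "{x,y} \<in> EG" using False xy by (auto simp: EG_def)
        ultimately show ?thesis using ded xy by blast
      qed
    qed
    then show False using nc by (auto simp: colorable_def)
  qed
  qed
  have CV: "contract_verts VG EG a v = S" using vS by (auto simp: contract_verts_def VG_def)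
  have CE: "contract_edges VG EG a v = E"
  proof
    show "contract_edges VG EG a v \<subseteq> E"
    proof
      fix e assume "e \<in> contract_edges VG EG a v"
      then have "e \<in> {e \<in> EG. a \<notin> e \<and> v \<notin> e} \<or> e \<in> {{a, x} | x. x \<in> (neighbours EG a \<union> neighbours EG v) - {a, v}}"
        unfolding contract_edges_def by (rule UnE) simp_all
      then consider "e \<in> EG" "a \<notin> e" "v \<notin> e" | x where "e = {a,x}" "x \<noteq> a" "x \<noteq> v" "adj EG a x \<or> adj EG v x"
      proof (elim disjE)
        assume "e \<in> {e \<in> EG. a \<notin> e \<and> v \<notin> e}" then show thesis using that(1) by simp
      next
        assume "e \<in> {{a, x} | x. x \<in> (neighbours EG a \<union> neighbours EG v) - {a, v}}"
        then obtain x where "e = {a,x}" "x \<in> (neighbours EG a \<union> neighbours EG v) - {a, v}" by blast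
        then show thesis using that(2)[of x] by (auto simp: neighbours_def)
      qed
      then show "e \<in> E"
      proof cases
        case 1 then show ?thesis by (auto simp: EG_def)
      next
        case 2
        show ?thesis
        proof (cases "adj EG a x")
          case True
          then have "{a,x} \<in> EG" by (simp add: adj_def)
          moreover have "{a,x} \<noteq> {a,v}" using 2 by (auto simp: doubleton_eq_iff)
          moreover have "{a,x} \<noteq> {v,b}" using av anb by (auto simp: doubleton_eq_iff)
          ultimately show ?thesis using 2 by (auto simp: EG_def)
        next
          case False
          then have "{v,x} \<in> EG" using 2 by (simp add: adj_def)
          moreover have "{v,x} \<notin> E" using vnot by blast
          moreover have "{v,x} \<noteq> {a,v}" using 2 by (auto simp: doubleton_eq_iff)
          ultimately have "{v,x} = {v,b}" by (auto simp: EG_def)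
          then have "x = b" using bv 2 by (auto simp: doubleton_eq_iff)
          then show ?thesis using 2 ab by simp
        qed
      qed
    qed
    show "E \<subseteq> contract_edges VG EG a v"
    proof
      fix e assume e: "e \<in> E"
      then have "card e = 2" using c2 by blast
      then obtain p q where pq: "e = {p,q}" "p \<noteq> q" unfolding card_2_iff by blast
      show "e \<in> contract_edges VG EG a v"
      proof (cases "a \<in> e")
        case False
        then have "e \<in> EG" using e by (auto simp: EG_def)
        then show ?thesis using False vnot[OF e] unfolding contract_edges_def by (intro UnI1) simp
      next
        case True
        then obtain x where x: "e = {a,x}" "x \<noteq> a" using pq by auto
        have xv: "x \<noteq> v" using vnot[OF e] x by auto
        have "x \<in> neighbours EG a \<union> neighbours EG v"
        proof (cases "x = b")
          case True
          then show ?thesis using bv by (auto simp: neighbours_def adj_def EG_def)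
        next
          case False
          then have "{a,x} \<in> EG" using e x by (auto simp: EG_def doubleton_eq_iff)
          then show ?thesis using x by (auto simp: neighbours_def adj_def)
        qed
        then have "x \<in> (neighbours EG a \<union> neighbours EG v) - {a, v}" using x xv by simp
        then have "e \<in> {{a, x} | x. x \<in> (neighbours EG a \<union> neighbours EG v) - {a, v}}" using x(1) by blast
        then show ?thesis unfolding contract_edges_def by (rule UnI2)
      qed
    qed
  qed
  have "planar (contract_verts VG EG a v) (contract_edges VG EG a v)" using CV CE pl by simp
  moreover have "a \<in> VG" "v \<in> VG" using aS by (auto simp: VG_def)
  ultimately show ?thesis using SG CONN PL K4 IMP av by blast
qed


lemma forward:
  assumes sg: "simple_graph V0 E0" and pl: "planar V0 E0" and ch: "k_chromatic V0 E0 5"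
  shows "\<exists>V E u v. simple_graph V E \<and> graph_connected V E \<and> planar V E \<and> k_chromatic V E 4 \<and>
        u \<in> V \<and> v \<in> V \<and> u \<noteq> v \<and> implicit_edge V E 4 u v \<and>
        planar (contract_verts V E u v) (contract_edges V E u v)"
proof -
  have sub0: "\<forall>e\<in>E0. e \<subseteq> V0 \<and> card e = 2" and finV0: "finite V0"
    using sg by (auto simp: simple_graph_def)
  have finE0: "finite E0"
  proof -
    have "E0 \<subseteq> Pow V0" using sub0 by auto
    then show ?thesis using finV0 finite_subset by blast
  qed
  define P where "P F \<longleftrightarrow> F \<subseteq> E0 \<and> \<not> colorable V0 F 4" for F
  have "P E0" using ch by (simp add: P_def k_chromatic_def)
  then obtain E1 where E1: "P E1" and min: "\<forall>F. P F \<longrightarrow> card E1 \<le> card F"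
    using ex_has_least_nat[of P E0 card] by blast
  have E1sub: "E1 \<subseteq> E0" and ncE1: "\<not> colorable V0 E1 4" using E1 by (auto simp: P_def)
  have finE1: "finite E1" using E1sub finE0 finite_subset by blast
  have minc: "colorable V0 F 4" if "F \<subset> E1" for F
  proof (rule ccontr)
    assume "\<not> colorable V0 F 4"
    then have "P F" using that E1sub by (auto simp: P_def)
    then have "card E1 \<le> card F" using min by blast
    moreover have "card F < card E1" using psubset_card_mono[OF finE1 that] .
    ultimately show False by simp
  qed
  have "E1 \<noteq> {}"
  proof
    assume "E1 = {}"
    moreover have "colorable V0 {} 4" unfolding colorable_def is_coloring_def
      by (rule exI[of _ "\<lambda>_. 1"]) auto
    ultimately show False using ncE1 by simp
  qed
  then obtain e0 where e0: "e0 \<in> E1" by blast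
  then have "card e0 = 2" using E1sub sub0 by blast
  then obtain x y where xy: "e0 = {x,y}" "x \<noteq> y" unfolding card_2_iff by blast
  have E1V0: "e \<subseteq> V0" if "e \<in> E1" for e using that E1sub sub0 by blast
  let ?R = "{(a,b). a\<in>V0 \<and> b\<in>V0 \<and> adj E1 a b}"
  define S where "S = {z. (x,z) \<in> ?R\<^sup>*}"
  have xV0: "x \<in> V0" using E1V0[OF e0] xy by auto
  have SV0: "S \<subseteq> V0"
  proof
    fix z assume "z \<in> S"
    then have "(x,z) \<in> ?R\<^sup>*" by (simp add: S_def)
    then show "z \<in> V0"
    proof (cases rule: rtranclE)
      case base then show ?thesis using xV0 by simp
    next
      case (step w) then show ?thesis by simp
    qed
  qed
  have clos: "q \<in> S" if "p \<in> S" "{p,q} \<in> E1" "p \<noteq> q" for p q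
  proof -
    have "p \<in> V0" "q \<in> V0" using E1V0[OF that(2)] by auto
    then have pq: "(p,q) \<in> ?R" using that by (auto simp: adj_def)
    have "(x,p) \<in> ?R\<^sup>*" using that(1) by (simp add: S_def)
    from this pq have "(x,q) \<in> ?R\<^sup>*" by (rule rtrancl_into_rtrancl)
    then show ?thesis by (simp add: S_def)
  qed
  have xS: "x \<in> S" by (simp add: S_def)
  have yS: "y \<in> S" using clos[OF xS] e0 xy by simp
  define E2 where "E2 = {e \<in> E1. e \<subseteq> S}"
  have E2eq: "E2 = E1"
  proof (rule ccontr)
    assume ne: "E2 \<noteq> E1"
    have "E2 \<subset> E1" using ne by (auto simp: E2_def)
    then obtain c1 where c1: "is_coloring V0 E2 4 c1" using minc by (auto simp: colorable_def)
    have "e0 \<in> E2" using e0 xy xS yS by (auto simp: E2_def)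
    then have "E1 - E2 \<subset> E1" using e0 by blast
    then obtain c2 where c2: "is_coloring V0 (E1 - E2) 4 c2" using minc by (auto simp: colorable_def)
    define c where "c z = (if z \<in> S then c1 z else c2 z)" for z
    have "is_coloring V0 E1 4 c"
      unfolding is_coloring_def
    proof (intro conjI allI impI ballI)
      fix z assume "z \<in> V0" then show "c z \<in> {1..4}" using c1 c2 by (auto simp: c_def is_coloring_def)
    next
      fix p q assume pq: "{p,q} \<in> E1 \<and> p \<noteq> q"
      show "c p \<noteq> c q"
      proof (cases "p \<in> S")
        case True
        then have "q \<in> S" using clos pq by blast
        then have "{p,q} \<in> E2" using True pq by (auto simp: E2_def)
        then show ?thesis using c1 pq True \<open>q \<in> S\<close> by (auto simp: c_def is_coloring_def)
      next
        case False
        have "{q,p} \<in> E1" using pq by (simp add: insert_commute)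
        then have "q \<notin> S" using clos False pq by blast
        then have "{p,q} \<in> E1 - E2" using False pq by (auto simp: E2_def)
        then show ?thesis using c2 pq False \<open>q \<notin> S\<close> by (auto simp: c_def is_coloring_def)
      qed
    qed
    then show False using ncE1 by (auto simp: colorable_def)
  qed
  have allS: "\<forall>e\<in>E1. e \<subseteq> S" using E2eq by (auto simp: E2_def)
  have finS: "finite S" using SV0 finV0 finite_subset by blast
  have SG: "simple_graph S E1" unfolding simple_graph_def
    using finS xS allS E1sub sub0 by blast
  let ?RS = "{(a,b). a\<in>S \<and> b\<in>S \<and> adj E1 a b}"
  have RRS: "(x,p) \<in> ?RS\<^sup>*" if "(x,p) \<in> ?R\<^sup>*" for p
    using that
  proof (induction rule: rtrancl_induct)
    case base then show ?case by simp
  next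
    case (step w z)
    have wS: "w \<in> S" using step.hyps(1) by (simp add: S_def)
    have "{w,z} \<in> E1" "w \<noteq> z" using step.hyps(2) by (auto simp: adj_def)
    then have "z \<in> S" using clos wS by blast
    then have "(w,z) \<in> ?RS" using wS step.hyps(2) by simp
    with step.IH show ?case by (rule rtrancl_into_rtrancl)
  qed
  have CONN: "graph_connected S E1"
  proof (rule conn_from_root[where r = x], intro ballI)
    fix p assume "p \<in> S"
    then show "(x,p) \<in> ?RS\<^sup>*" using RRS by (simp add: S_def)
  qed
  have PL: "planar S E1" by (rule planar_sub[OF pl SV0 E1sub allS])
  have NC: "\<not> colorable S E1 4"
  proof
    assume "colorable S E1 4"
    then obtain c where c: "is_coloring S E1 4 c" by (auto simp: colorable_def)
    have "is_coloring V0 E1 4 (\<lambda>z. if z \<in> S then c z else 1)"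
      unfolding is_coloring_def
    proof (intro conjI allI impI ballI)
      fix z assume "z \<in> V0" then show "(if z \<in> S then c z else 1) \<in> {1..4}" using c by (auto simp: is_coloring_def)
    next
      fix p q assume pq: "{p,q} \<in> E1 \<and> p \<noteq> q"
      then have "p \<in> S" "q \<in> S" using allS by auto
      then show "(if p \<in> S then c p else 1) \<noteq> (if q \<in> S then c q else 1)" using c pq by (auto simp: is_coloring_def)
    qed
    then show False using ncE1 by (auto simp: colorable_def)
  qed
  have COL: "colorable S (E1 - {{x,y}}) 4"
  proof -
    have "E1 - {e0} \<subset> E1" using e0 by blast
    then have "colorable V0 (E1 - {e0}) 4" by (rule minc)
    then obtain c where c: "is_coloring V0 (E1 - {e0}) 4 c" by (auto simp: colorable_def)
    then have "is_coloring S (E1 - {{x,y}}) 4 c" using SV0 xy by (auto simp: is_coloring_def)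
    then show ?thesis by (auto simp: colorable_def)
  qed
  obtain v :: nat where vS: "v \<notin> S" using ex_new_if_finite[OF infinite_UNIV_nat finS] by blast
  show ?thesis by (rule construct[OF SG CONN PL _ xy(2) NC COL vS]) (use e0 xy in simp)
qed

theorem theorem7:
  shows "(\<exists>V E. simple_graph V E \<and> graph_connected V E \<and> planar V E \<and> k_chromatic V E 5)
     \<longleftrightarrow>
     (\<exists>V E u v. simple_graph V E \<and> graph_connected V E \<and> planar V E \<and> k_chromatic V E 4 \<and>
        u \<in> V \<and> v \<in> V \<and> u \<noteq> v \<and> implicit_edge V E 4 u v \<and>
        planar (contract_verts V E u v) (contract_edges V E u v))"
proof
  assume "\<exists>V E. simple_graph V E \<and> graph_connected V E \<and> planar V E \<and> k_chromatic V E 5"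
  then obtain V E where "simple_graph V E" "planar V E" "k_chromatic V E 5" by blast
  then show "\<exists>V E u v. simple_graph V E \<and> graph_connected V E \<and> planar V E \<and> k_chromatic V E 4 \<and>
        u \<in> V \<and> v \<in> V \<and> u \<noteq> v \<and> implicit_edge V E 4 u v \<and>
        planar (contract_verts V E u v) (contract_edges V E u v)" by (rule forward)
next
  assume "\<exists>V E u v. simple_graph V E \<and> graph_connected V E \<and> planar V E \<and> k_chromatic V E 4 \<and>
        u \<in> V \<and> v \<in> V \<and> u \<noteq> v \<and> implicit_edge V E 4 u v \<and>
        planar (contract_verts V E u v) (contract_edges V E u v)"
  then obtain V E u v where h: "simple_graph V E" "graph_connected V E" "k_chromatic V E 4"
    "u \<in> V" "v \<in> V" "u \<noteq> v" "implicit_edge V E 4 u v"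
    "planar (contract_verts V E u v) (contract_edges V E u v)" by blast
  have "simple_graph (contract_verts V E u v) (contract_edges V E u v) \<and>
         graph_connected (contract_verts V E u v) (contract_edges V E u v) \<and>
         k_chromatic (contract_verts V E u v) (contract_edges V E u v) 5"
    by (rule backward[OF h(1-7)])
  then show "\<exists>V E. simple_graph V E \<and> graph_connected V E \<and> planar V E \<and> k_chromatic V E 5"
    using h(8) by blast
qed

end
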